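(* Suppose the dynamic deficiency of the network is $1$ and that the network has a positive steady state $x^*\in\mathbb{R}_{>0}^n$. Let $C_1,\dots,C_k$ (after reordering) be the complexes that do not lie in any terminal strongly connected component of $G$, and let $\chi\in\ker M\setminus\ker\mathcal{L}(G)$. Then $\chi_i\neq0$ for $1\le i\le k$, and for every steady state $x$ and every $2\le i\le k$, \[x^{C_i}=\frac{\chi_i}{\chi_1}\,x^{C_1},\] each of these being a type 1 complex-linear invariant on $C_1,\dots,C_k$.
   Context: Setup: species $S_1,\dots,S_n$, concentrations $x$, complexes $C_1,\dots,C_m\in\mathbb{Z}_{\ge0}^n$, reaction graph $G$ on complexes with positive edge labels $\kappa_{ij}$. Laplacian $\mathcal{L}(G)$: $\mathcal{L}(G)_{ji}=\kappa_{ij}$ for edges $C_i\to C_j$, other off-diagonal entries $0$, $\mathcal{L}(G)_{ii}=-\sum_j\kappa_{ij}$. $Y$ is the $n\times m$ matrix with columns $C_i$; $x^C=\prod_jx_j^{C(S_j)}$, $\Psi(x)=(x^{C_1},\dots,x^{C_m})^\top$; dynamics $dx/dt=Y\mathcal{L}(G)\Psi(x)$; $M=Y\mathcal{L}(G)$; steady state means $M\Psi(x)=0$. A strongly connected component of $G$ is a maximal subgraph in which any two nodes are joined by directed paths in both directions; it is terminal if no edge leaves it. $\ker\mathcal{L}(G)$ is spanned by vectors each supported on the nodes of a single terminal strongly connected component. The dynamic deficiency is $\delta_D=\dim\ker M-\dim\ker\mathcal{L}(G)$. A type 1 complex-linear invariant on $C_1,\dots,C_k$ is a polynomial $a_1x^{C_1}+\dots+a_kx^{C_k}$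 with $(a_1,\dots,a_k,0,\dots,0)$ in the row span of $M$. *)

theory Defs
  imports "HOL-Analysis.Analysis"
begin

(* Species are indexed by a finite type 's, complexes by a finite type 'c.
   A complex is  C :: 'c => 's => nat  (C i j = coefficient of species j in complex i). *)

definition edges :: "('c \<Rightarrow> 'c \<Rightarrow> real) \<Rightarrow> ('c \<times> 'c) set" where
  "edges \<kappa> = {(i, j). \<kappa> i j > 0}"

definition strongly_connected_set :: "('c \<Rightarrow> 'c \<Rightarrow> real) \<Rightarrow> 'c set \<Rightarrow> bool" where
  "strongly_connected_set \<kappa> S \<longleftrightarrow>
     (\<forall>a\<in>S. \<forall>b\<in>S. (a, b) \<in> (edges \<kappa>)\<^sup>* \<and> (b, a) \<in> (edges \<kappa>)\<^sup>*)"

definition scc :: "('c \<Rightarrow> 'c \<Rightarrow> real) \<Rightarrow> 'c set \<Rightarrow> bool" where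
  "scc \<kappa> S \<longleftrightarrow> S \<noteq> {} \<and> strongly_connected_set \<kappa> S \<and>
     (\<forall>T. strongly_connected_set \<kappa> T \<and> S \<subseteq> T \<longrightarrow> T = S)"

definition terminal_scc :: "('c \<Rightarrow> 'c \<Rightarrow> real) \<Rightarrow> 'c set \<Rightarrow> bool" where
  "terminal_scc \<kappa> S \<longleftrightarrow> scc \<kappa> S \<and> (\<forall>a\<in>S. \<forall>b. (a, b) \<in> edges \<kappa> \<longrightarrow> b \<in> S)"

definition non_terminal_complexes :: "('c \<Rightarrow> 'c \<Rightarrow> real) \<Rightarrow> 'c set" where
  "non_terminal_complexes \<kappa> = {i. \<not> (\<exists>S. terminal_scc \<kappa> S \<and> i \<in> S)}"

definition laplacian :: "('c::finite \<Rightarrow> 'c \<Rightarrow> real) \<Rightarrow> real^'c^'c" where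
  "laplacian \<kappa> = (\<chi> j i. if i = j then - (\<Sum>l\<in>UNIV. \<kappa> i l) else \<kappa> i j)"

definition Ymat :: "('c::finite \<Rightarrow> 's::finite \<Rightarrow> nat) \<Rightarrow> real^'c^'s" where
  "Ymat C = (\<chi> s i. real (C i s))"

definition Mmat :: "('c::finite \<Rightarrow> 's::finite \<Rightarrow> nat) \<Rightarrow> ('c \<Rightarrow> 'c \<Rightarrow> real) \<Rightarrow> real^'c^'s" where
  "Mmat C \<kappa> = Ymat C ** laplacian \<kappa>"

definition monom :: "real^'s::finite \<Rightarrow> ('s \<Rightarrow> nat) \<Rightarrow> real" where
  "monom x c = (\<Prod>j\<in>UNIV. (x $ j) ^ c j)"

definition Psi :: "('c::finite \<Rightarrow> 's::finite \<Rightarrow> nat) \<Rightarrow> real^'s \<Rightarrow> real^'c" where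
  "Psi C x = (\<chi> i. monom x (C i))"

definition steady_state :: "('c::finite \<Rightarrow> 's::finite \<Rightarrow> nat) \<Rightarrow> ('c \<Rightarrow> 'c \<Rightarrow> real) \<Rightarrow> real^'s \<Rightarrow> bool" where
  "steady_state C \<kappa> x \<longleftrightarrow> Mmat C \<kappa> *v Psi C x = 0"

definition mat_ker :: "real^'a::finite^'b::finite \<Rightarrow> (real^'a) set" where
  "mat_ker A = {v. A *v v = 0}"

definition dynamic_deficiency :: "('c::finite \<Rightarrow> 's::finite \<Rightarrow> nat) \<Rightarrow> ('c \<Rightarrow> 'c \<Rightarrow> real) \<Rightarrow> int" where
  "dynamic_deficiency C \<kappa> = int (dim (mat_ker (Mmat C \<kappa>))) - int (dim (mat_ker (laplacian \<kappa>)))"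

(* a type 1 complex-linear invariant on the complexes in N, with coefficient vector a:
   a is supported on N and lies in the row span of M *)
definition type1_invariant :: "real^'c::finite^'s::finite \<Rightarrow> 'c set \<Rightarrow> real^'c \<Rightarrow> bool" where
  "type1_invariant M N a \<longleftrightarrow> (\<forall>j. j \<notin> N \<longrightarrow> a $ j = 0) \<and> a \<in> span (rows M)"

end

theory Submission imports Defs begin

lemma closed_has_terminal:
  fixes \<kappa> :: "'c::finite \<Rightarrow> 'c \<Rightarrow> real"
  assumes ne: "a0 \<in> S" and closed: "\<And>a b. a \<in> S \<Longrightarrow> (a,b) \<in> edges \<kappa> \<Longrightarrow> b \<in> S"
  shows "\<exists>a\<in>S. \<exists>R. terminal_scc \<kappa> R \<and> a \<in> R"
proof -
  let ?E = "edges \<kappa>"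
  define reach where "reach a = {b. (a,b) \<in> ?E\<^sup>*}" for a
  obtain a where aS: "a \<in> S" and amin: "\<And>y. y \<in> S \<Longrightarrow> card (reach a) \<le> card (reach y)"
    using ex_has_least_nat[of "\<lambda>x. x \<in> S" a0 "\<lambda>x. card (reach x)"] ne by blast
  have RS: "reach a \<subseteq> S"
  proof
    fix b assume "b \<in> reach a"
    then have "(a,b) \<in> ?E\<^sup>*" by (simp add: reach_def)
    then show "b \<in> S"
      by (induction rule: rtrancl_induct) (use aS closed in auto)
  qed
  have bk: "(b,a) \<in> ?E\<^sup>*" if b: "b \<in> reach a" for b
  proof -
    have sub: "reach b \<subseteq> reach a" using b by (auto simp: reach_def)
    have "card (reach a) \<le> card (reach b)" using amin RS b by blast
    then have "reach b = reach a" using sub card_seteq[of "reach a" "reach b"] by simp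
    then have "a \<in> reach b" by (simp add: reach_def)
    then show ?thesis by (simp add: reach_def)
  qed
  have sc: "strongly_connected_set \<kappa> (reach a)"
    unfolding strongly_connected_set_def
  proof (intro ballI conjI)
    fix b c assume b: "b \<in> reach a" and c: "c \<in> reach a"
    show "(b,c) \<in> ?E\<^sup>*" using bk[OF b] c by (auto simp: reach_def)
    show "(c,b) \<in> ?E\<^sup>*" using bk[OF c] b by (auto simp: reach_def)
  qed
  have "terminal_scc \<kappa> (reach a)"
    unfolding terminal_scc_def scc_def
  proof (intro conjI allI impI ballI)
    show "reach a \<noteq> {}" by (auto simp: reach_def)
    show "strongly_connected_set \<kappa> (reach a)" by (rule sc)
    fix T assume "strongly_connected_set \<kappa> T \<and> reach a \<subseteq> T"
    then show "T = reach a"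
      unfolding strongly_connected_set_def
      by (auto simp: reach_def)
  next
    fix b c assume "b \<in> reach a" "(b,c) \<in> ?E"
    then show "c \<in> reach a" by (auto simp: reach_def)
  qed
  moreover have "a \<in> reach a" by (simp add: reach_def)
  ultimately show ?thesis using aS by blast
qed


lemma lap_row:
  fixes \<kappa> :: "'c::finite \<Rightarrow> 'c \<Rightarrow> real"
  assumes nl: "\<forall>i. \<kappa> i i = 0"
  shows "(laplacian \<kappa> *v v) $ j = (\<Sum>i\<in>UNIV. \<kappa> i j * v $ i) - (\<Sum>l\<in>UNIV. \<kappa> j l) * v $ j"
proof -
  have "(laplacian \<kappa> *v v) $ j = (\<Sum>i\<in>UNIV. (if i = j then - (\<Sum>l\<in>UNIV. \<kappa> i l) else \<kappa> i j) * v $ i)"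
    by (simp add: laplacian_def matrix_vector_mult_def)
  also have "\<dots> = (\<Sum>i\<in>UNIV. (if i = j then - (\<Sum>l\<in>UNIV. \<kappa> j l) * v $ j else 0) + \<kappa> i j * v $ i)"
    by (rule sum.cong) (auto simp: nl)
  also have "\<dots> = (\<Sum>i\<in>UNIV. \<kappa> i j * v $ i) - (\<Sum>l\<in>UNIV. \<kappa> j l) * v $ j"
    by (simp add: sum.distrib)
  finally show ?thesis .
qed

lemma ker_lap_zero:
  fixes \<kappa> :: "'c::finite \<Rightarrow> 'c \<Rightarrow> real"
  assumes nn: "\<forall>i j. \<kappa> i j \<ge> 0" and nl: "\<forall>i. \<kappa> i i = 0"
    and ker: "laplacian \<kappa> *v v = 0"
  shows "\<forall>i \<in> non_terminal_complexes \<kappa>. v $ i = 0"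
proof (rule ccontr)
  define T where "T = non_terminal_complexes \<kappa>"
  define out where "out j = (\<Sum>l\<in>UNIV. \<kappa> j l)" for j
  assume "\<not> (\<forall>i \<in> non_terminal_complexes \<kappa>. v $ i = 0)"
  then obtain i0 where i0: "i0 \<in> T" "v $ i0 \<noteq> 0" by (auto simp: T_def)
  have eq1: "(\<Sum>i\<in>UNIV. \<kappa> i j * v $ i) = out j * v $ j" for j
    using lap_row[of \<kappa> v j] nl ker by (simp add: out_def)
  have zero_in: "\<kappa> i j = 0" if "j \<in> T" "i \<notin> T" for i j
  proof (rule ccontr)
    assume "\<kappa> i j \<noteq> 0"
    then have e: "(i,j) \<in> edges \<kappa>" using nn by (auto simp: edges_def order_less_le)
    from that(2) obtain S where "terminal_scc \<kappa> S" "i \<in> S" by (auto simp: T_def non_terminal_complexes_def)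
    then have "j \<in> S" using e by (auto simp: terminal_scc_def)
    then show False using that(1) \<open>terminal_scc \<kappa> S\<close> by (auto simp: T_def non_terminal_complexes_def)
  qed
  have eq3: "out j * v $ j = (\<Sum>i\<in>T. \<kappa> i j * v $ i)" if "j \<in> T" for j
  proof -
    have "(\<Sum>i\<in>UNIV. \<kappa> i j * v $ i) = (\<Sum>i\<in>T. \<kappa> i j * v $ i)"
      by (rule sum.mono_neutral_right) (use zero_in that in auto)
    then show ?thesis using eq1 by simp
  qed
  have outnn: "out j \<ge> 0" for j using nn by (simp add: out_def sum_nonneg)
  have le1: "out j * \<bar>v $ j\<bar> \<le> (\<Sum>i\<in>T. \<kappa> i j * \<bar>v $ i\<bar>)" if "j \<in> T" for j
  proof -
    have "out j * \<bar>v $ j\<bar> = \<bar>out j * v $ j\<bar>" using outnn by (simp add: abs_mult)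
    also have "\<dots> = \<bar>\<Sum>i\<in>T. \<kappa> i j * v $ i\<bar>" using eq3[OF that] by simp
    also have "\<dots> \<le> (\<Sum>i\<in>T. \<bar>\<kappa> i j * v $ i\<bar>)" by (rule sum_abs)
    also have "\<dots> = (\<Sum>i\<in>T. \<kappa> i j * \<bar>v $ i\<bar>)" using nn by (simp add: abs_mult)
    finally show ?thesis .
  qed
  have le2: "(\<Sum>j\<in>T. \<kappa> i j) \<le> out i" for i
    unfolding out_def by (rule sum_mono2) (use nn in auto)
  define A where "A = (\<Sum>j\<in>T. out j * \<bar>v $ j\<bar>)"
  define B where "B = (\<Sum>j\<in>T. \<Sum>i\<in>T. \<kappa> i j * \<bar>v $ i\<bar>)"
  have AB: "A \<le> B" unfolding A_def B_def by (rule sum_mono) (rule le1)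
  have B2: "B = (\<Sum>i\<in>T. \<bar>v $ i\<bar> * (\<Sum>j\<in>T. \<kappa> i j))"
    unfolding B_def by (subst sum.swap) (simp add: sum_distrib_left mult.commute)
  have BA: "B \<le> A" unfolding B2 A_def
    by (rule sum_mono) (metis le2 abs_ge_zero mult.commute mult_left_mono)
  have s2: "(\<Sum>i\<in>T. \<bar>v $ i\<bar> * (out i - (\<Sum>j\<in>T. \<kappa> i j))) = 0"
    using AB BA unfolding B2 A_def by (simp add: right_diff_distrib sum_subtractf mult.commute)
  have p2: "\<bar>v $ i\<bar> * (out i - (\<Sum>j\<in>T. \<kappa> i j)) = 0" if "i \<in> T" for i
    using sum_nonneg_eq_0_iff[THEN iffD1, OF _ _ s2] that le2 by auto
  have s1: "(\<Sum>j\<in>T. (\<Sum>i\<in>T. \<kappa> i j * \<bar>v $ i\<bar>) - out j * \<bar>v $ j\<bar>) = 0"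
    using AB BA unfolding A_def B_def by (simp add: sum_subtractf)
  have p1: "(\<Sum>i\<in>T. \<kappa> i j * \<bar>v $ i\<bar>) - out j * \<bar>v $ j\<bar> = 0" if "j \<in> T" for j
    using sum_nonneg_eq_0_iff[THEN iffD1, OF _ _ s1] that le1 by auto
  define S where "S = {i\<in>T. v $ i \<noteq> 0}"
  have closed: "b \<in> S" if "a \<in> S" "(a,b) \<in> edges \<kappa>" for a b
  proof -
    have ab: "\<kappa> a b > 0" using that(2) by (simp add: edges_def)
    have aT: "a \<in> T" and va: "v $ a \<noteq> 0" using that(1) by (auto simp: S_def)
    have "out a = (\<Sum>j\<in>T. \<kappa> a j)" using p2[OF aT] va by simp
    then have "(\<Sum>j\<in>UNIV - T. \<kappa> a j) = 0"
      unfolding out_def using sum.subset_diff[of T "UNIV" "\<kappa> a"] by simp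
    then have "\<forall>j\<in>UNIV - T. \<kappa> a j = 0"
      using sum_nonneg_eq_0_iff[of "UNIV - T" "\<kappa> a"] nn by auto
    then have bT: "b \<in> T" using ab by (metis DiffI UNIV_I less_irrefl)
    have vb: "v $ b \<noteq> 0"
    proof
      assume "v $ b = 0"
      then have "(\<Sum>i\<in>T. \<kappa> i b * \<bar>v $ i\<bar>) = 0" using p1[OF bT] by simp
      then have "\<forall>i\<in>T. \<kappa> i b * \<bar>v $ i\<bar> = 0"
        using sum_nonneg_eq_0_iff[of T "\<lambda>i. \<kappa> i b * \<bar>v $ i\<bar>"] nn by auto
      then show False using aT va ab by auto
    qed
    show ?thesis using bT vb by (simp add: S_def)
  qed
  have "i0 \<in> S" using i0 by (simp add: S_def)
  have "\<exists>a\<in>S. \<exists>R. terminal_scc \<kappa> R \<and> a \<in> R"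
    by (rule closed_has_terminal[of i0 S \<kappa>]) (fact, rule closed)
  then obtain a R where "a \<in> S" "terminal_scc \<kappa> R" "a \<in> R" by blast
  then show False by (auto simp: S_def T_def non_terminal_complexes_def)
qed


lemma subspace_mat_ker: "subspace (mat_ker (A::real^'a::finite^'b::finite))"
  unfolding subspace_def mat_ker_def
  by (auto simp: matrix_vector_right_distrib matrix_vector_mult_scaleR)

lemma perp_ker_rowspan:
  fixes A :: "real^'a::finite^'b::finite"
  assumes "\<And>w. w \<in> mat_ker A \<Longrightarrow> inner a w = 0"
  shows "a \<in> span (rows A)"
proof -
  obtain y z where y: "y \<in> span (rows A)" and z: "\<And>w. w \<in> span (rows A) \<Longrightarrow> orthogonal z w"
    and a: "a = y + z"
    using orthogonal_subspace_decomp_exists[of "rows A" a] by blast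
  have "A *v z = 0"
  proof (rule vec_eq_iff[THEN iffD2], rule allI)
    fix k
    have r: "row k A \<in> span (rows A)" by (auto simp: rows_def intro: span_base)
    have "row k A = A $ k" by (simp add: row_def vec_eq_iff)
    then have "inner (A $ k) z = 0" using z[OF r] by (simp add: orthogonal_def inner_commute)
    then show "(A *v z) $ k = 0 $ k" by (simp add: matrix_vector_mul_component)
  qed
  then have "inner a z = 0" using assms by (simp add: mat_ker_def)
  moreover have "inner y z = 0" using z[OF y] by (simp add: orthogonal_def inner_commute)
  ultimately have "inner z z = 0" using a by (simp add: inner_add_left)
  then have "z = 0" by simp
  then show ?thesis using a y by simp
qed

lemma inner_two:
  fixes v :: "real^'c::finite"
  assumes "i \<noteq> i1"
  shows "inner (\<chi> j. if j = i then 1 else if j = i1 then - r else 0) v = v $ i - r * v $ i1"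
proof -
  have "inner (\<chi> j. if j = i then 1 else if j = i1 then - r else 0) v
      = (\<Sum>j\<in>UNIV. (if j = i then v $ i else 0) + (if j = i1 then - r * v $ i1 else 0))"
    unfolding inner_vec_def by (rule sum.cong) (use assms in auto)
  also have "\<dots> = v $ i - r * v $ i1" by (simp add: sum.distrib)
  finally show ?thesis .
qed


theorem mainTheorem4:
  fixes C :: "'c::finite \<Rightarrow> 's::finite \<Rightarrow> nat"
    and \<kappa> :: "'c \<Rightarrow> 'c \<Rightarrow> real"
    and \<chi>v :: "real^'c"
  assumes distinct_complexes: "inj C"
    and nonneg_labels: "\<forall>i j. \<kappa> i j \<ge> 0"
    and no_loops: "\<forall>i. \<kappa> i i = 0"
    and deficiency_one: "dynamic_deficiency C \<kappa> = 1"
    and pos_ss: "\<exists>xs::real^'s. (\<forall>j. xs $ j > 0) \<and> steady_state C \<kappa> xs"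
    and chi_ker: "\<chi>v \<in> mat_ker (Mmat C \<kappa>)"
    and chi_notker: "\<chi>v \<notin> mat_ker (laplacian \<kappa>)"
  shows "(\<forall>i\<in>non_terminal_complexes \<kappa>. \<chi>v $ i \<noteq> 0) \<and>
    (\<forall>i1\<in>non_terminal_complexes \<kappa>. \<forall>i\<in>non_terminal_complexes \<kappa>. i \<noteq> i1 \<longrightarrow>
       (\<forall>x::real^'s. (\<forall>j. x $ j \<ge> 0) \<and> steady_state C \<kappa> x \<longrightarrow>
          monom x (C i) = (\<chi>v $ i / \<chi>v $ i1) * monom x (C i1)) \<and>
       type1_invariant (Mmat C \<kappa>) (non_terminal_complexes \<kappa>)
         (\<chi> j. if j = i then 1 else if j = i1 then - (\<chi>v $ i / \<chi>v $ i1) else 0))"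
proof -
  define K where "K = mat_ker (laplacian \<kappa>)"
  define KM where "KM = mat_ker (Mmat C \<kappa>)"
  define T where "T = non_terminal_complexes \<kappa>"
  have sK: "subspace K" and sKM: "subspace KM" unfolding K_def KM_def by (rule subspace_mat_ker)+
  have KKM: "K \<subseteq> KM"
    by (auto simp: K_def KM_def mat_ker_def Mmat_def matrix_vector_mul_assoc[symmetric])
  have dimKM: "dim KM = dim K + 1"
    using deficiency_one by (simp add: dynamic_deficiency_def K_def KM_def)
  have chiK: "\<chi>v \<notin> span K" using chi_notker sK by (metis K_def span_eq_iff)
  have dI: "dim (insert \<chi>v K) = dim K + 1" using chiK by (simp add: dim_insert)
  have sub: "insert \<chi>v K \<subseteq> KM" using KKM chi_ker by (simp add: KM_def)
  have "span (insert \<chi>v K) = span KM" by (rule dim_eq_span[OF sub]) (simp add: dI dimKM)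
  then have spanEq: "span (insert \<chi>v K) = KM" using sKM by simp
  have decomp: "\<exists>c. w - c *\<^sub>R \<chi>v \<in> K" if "w \<in> KM" for w
  proof -
    have "w \<in> span (insert \<chi>v K)" using that spanEq by simp
    then obtain k where "w - k *\<^sub>R \<chi>v \<in> span K" by (auto simp: span_breakdown_eq)
    then show ?thesis using sK by (metis span_eq_iff)
  qed
  have Kz: "u $ i = 0" if "u \<in> K" "i \<in> T" for u i
    using ker_lap_zero[OF nonneg_labels no_loops, of u] that by (auto simp: K_def mat_ker_def T_def)
  have comp: "\<exists>c. \<forall>i\<in>T. w $ i = c * \<chi>v $ i" if wKM: "w \<in> KM" for w
  proof -
    obtain c where "w - c *\<^sub>R \<chi>v \<in> K" using decomp[OF wKM] by blast
    then have "\<forall>i\<in>T. w $ i = c * \<chi>v $ i" using Kz by fastforce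
    then show ?thesis by blast
  qed
  have ssKM: "Psi C x \<in> KM" if "steady_state C \<kappa> x" for x
    using that by (simp add: steady_state_def KM_def mat_ker_def)
  obtain xs :: "real^'s" where xpos: "\<forall>j. xs $ j > 0" and xss: "steady_state C \<kappa> xs"
    using pos_ss by blast
  obtain c0 where c0: "\<forall>i\<in>T. Psi C xs $ i = c0 * \<chi>v $ i" using comp[OF ssKM[OF xss]] by blast
  have mpos: "monom xs c > 0" for c unfolding monom_def using xpos by (simp add: prod_pos)
  have nz: "\<chi>v $ i \<noteq> 0" if "i \<in> T" for i
  proof
    assume "\<chi>v $ i = 0"
    then have "Psi C xs $ i = 0" using c0 that by simp
    then show False using mpos[of "C i"] by (simp add: Psi_def)
  qed
  show ?thesis
    unfolding T_def[symmetric]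
  proof (intro conjI ballI impI allI)
    fix i assume "i \<in> T" then show "\<chi>v $ i \<noteq> 0" by (rule nz)
  next
    fix i1 i x assume i1: "i1 \<in> T" and i: "i \<in> T" and ne: "i \<noteq> i1"
      and x: "(\<forall>j. 0 \<le> x $ j) \<and> steady_state C \<kappa> x"
    obtain c where c: "\<forall>i\<in>T. Psi C x $ i = c * \<chi>v $ i" using comp[OF ssKM] x by blast
    show "monom x (C i) = \<chi>v $ i / \<chi>v $ i1 * monom x (C i1)"
      using c i i1 nz[OF i1] by (simp add: Psi_def)
  next
    fix i1 i assume i1: "i1 \<in> T" and i: "i \<in> T" and ne: "i \<noteq> i1"
    show "type1_invariant (Mmat C \<kappa>) T
         (\<chi> j. if j = i then 1 else if j = i1 then - (\<chi>v $ i / \<chi>v $ i1) else 0)"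
      unfolding type1_invariant_def
    proof (intro conjI allI impI)
      fix j assume "j \<notin> T"
      then show "(\<chi> j. if j = i then 1 else if j = i1 then - (\<chi>v $ i / \<chi>v $ i1) else 0) $ j = 0"
        using i i1 by auto
    next
      show "(\<chi> j. if j = i then 1 else if j = i1 then - (\<chi>v $ i / \<chi>v $ i1) else 0) \<in> span (rows (Mmat C \<kappa>))"
      proof (rule perp_ker_rowspan)
        fix w assume w: "w \<in> mat_ker (Mmat C \<kappa>)"
        obtain c where c: "\<forall>i\<in>T. w $ i = c * \<chi>v $ i" using comp w by (auto simp: KM_def)
        show "inner (\<chi> j. if j = i then 1 else if j = i1 then - (\<chi>v $ i / \<chi>v $ i1) else 0) w = 0"
          using inner_two[OF ne] c i i1 nz[OF i1] by simp
      qed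
    qed
  qed
qed

end
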